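(* Let $\sigma$ be a rank-one ruled submanifold whose ruling distribution has degree one at every $t\in I$, and suppose $\rho_{t}X_{m-1}(t)\neq0$ for all $t\in I$. Let $\beta$ be the striction hypersurface of $\sigma$, as defined below. Then every point of the striction hypersurface is a singular point of $\sigma$. That is, $\sigma$ is singular at $(t,u^{1},\dotsc,u^{m-2},f(t,u^{1},\dotsc,u^{m-2}))$ for all $(t,u^{1},\dotsc,u^{m-2})\in I\times\mathbb{R}^{m-2}$; equivalently, $\frac{\partial\beta}{\partial t}\wedge X_{1}\wedge\dotsb\wedge X_{m-1}=0$ everywhere on $I\times\mathbb{R}^{m-2}$.
   Context: Ruled submanifold: given an open interval $I$, a smooth unit-speed curve $\gamma\colon I\to\mathbb{R}^{m+n}$ and smooth vector fields $X_{1},\dotsc,X_{m-1}$ along $\gamma$ that are orthonormal at each $t$, define $\sigma(t,u^{1},\dotsc,u^{m-1})=\gamma(t)+\sum_{j=1}^{m-1}u^{j}X_{j}(t)$ on $I\times\mathbb{R}^{m-1}$. A point is regular if $d\sigma$ is injective there and singular otherwise. Let $\mathcal{D}_{t}=\operatorname{Span}(X_{j}(t))_{j=1}^{m-1}$ and $\rho_{t}X_{j}(t)=\pi^{\perp}\dot X_{j}(t)$, where $\pi^{\perp}$ is orthogonal projection onto $\mathcal{D}_{t}^{\perp}$. The degree of $\mathcal{D}$ at $t$ is the rank of the linear map $\sum_jc_jX_j(t)\mapsto\sum_jc_j\rho_tX_j(t)$. A ruled submanifold is rank-one if at every regular point the kernel of its second fundamental form has dimension $m-1$. Striction hypersurface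 (the case $d=1$): define $$f(t,u^{1},\dotsc,u^{m-2})=-\frac{\langle\dot\gamma(t),\rho_{t}X_{m-1}(t)\rangle+\sum_{i=1}^{m-2}u^{i}\langle\dot X_{i}(t),\rho_{t}X_{m-1}(t)\rangle}{|\rho_{t}X_{m-1}(t)|^{2}}$$ and $$\beta(t,u^{1},\dotsc,u^{m-2})=\gamma(t)+\sum_{i=1}^{m-2}u^{i}X_{i}(t)+f(t,u^{1},\dotsc,u^{m-2})X_{m-1}(t).$$ This $\beta$ is the unique map of this form satisfying $\langle\partial\beta/\partial t,\rho_{t}X_{m-1}\rangle=0$. *)

theory Defs
  imports "HOL-Analysis.Analysis"
begin

definition vd :: "(real \<Rightarrow> 'a::real_normed_vector) \<Rightarrow> real \<Rightarrow> 'a" where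
  "vd f t = vector_derivative f (at t)"

definition smooth_curve_on :: "real set \<Rightarrow> (real \<Rightarrow> 'a::real_normed_vector) \<Rightarrow> bool" where
  "smooth_curve_on I f \<longleftrightarrow>
     (\<exists>D :: nat \<Rightarrow> real \<Rightarrow> 'a. D 0 = f \<and>
        (\<forall>k. \<forall>t\<in>I. (D k has_vector_derivative D (Suc k) t) (at t)))"

text \<open>The ruled map sigma(t,u) = gamma(t) + sum_{j=1}^{m-1} u^j X_j(t);
  parameters u are functions nat => real, only entries 1..m-1 matter.\<close>
definition ruled_sigma ::
  "(real \<Rightarrow> 'a::euclidean_space) \<Rightarrow> (nat \<Rightarrow> real \<Rightarrow> 'a) \<Rightarrow> nat \<Rightarrow> real \<Rightarrow> (nat \<Rightarrow> real) \<Rightarrow> 'a" where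
  "ruled_sigma \<gamma> X m t u = \<gamma> t + (\<Sum>j\<in>{1..m-1}. u j *\<^sub>R X j t)"

text \<open>Parameter space R x R^(m-1) (tangent vectors of the domain).\<close>
definition params :: "nat \<Rightarrow> (real \<times> (nat \<Rightarrow> real)) set" where
  "params m = {(a, c). \<forall>j. j \<notin> {1..m-1} \<longrightarrow> c j = 0}"

definition dsigma ::
  "(real \<Rightarrow> 'a::euclidean_space) \<Rightarrow> (nat \<Rightarrow> real \<Rightarrow> 'a) \<Rightarrow> nat \<Rightarrow> real \<Rightarrow> (nat \<Rightarrow> real)
    \<Rightarrow> real \<times> (nat \<Rightarrow> real) \<Rightarrow> 'a" where
  "dsigma \<gamma> X m t u p =
     fst p *\<^sub>R (vd \<gamma> t + (\<Sum>j\<in>{1..m-1}. u j *\<^sub>R vd (X j) t))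
     + (\<Sum>j\<in>{1..m-1}. snd p j *\<^sub>R X j t)"

definition regular_point ::
  "(real \<Rightarrow> 'a::euclidean_space) \<Rightarrow> (nat \<Rightarrow> real \<Rightarrow> 'a) \<Rightarrow> nat \<Rightarrow> real \<Rightarrow> (nat \<Rightarrow> real) \<Rightarrow> bool" where
  "regular_point \<gamma> X m t u \<longleftrightarrow> inj_on (dsigma \<gamma> X m t u) (params m)"

abbreviation singular_point where
  "singular_point \<gamma> X m t u \<equiv> \<not> regular_point \<gamma> X m t u"

definition d2sigma ::
  "(real \<Rightarrow> 'a::euclidean_space) \<Rightarrow> (nat \<Rightarrow> real \<Rightarrow> 'a) \<Rightarrow> nat \<Rightarrow> real \<Rightarrow> (nat \<Rightarrow> real)
    \<Rightarrow> real \<times> (nat \<Rightarrow> real) \<Rightarrow> real \<times> (nat \<Rightarrow> real) \<Rightarrow> 'a" where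
  "d2sigma \<gamma> X m t u p q =
     (fst p * fst q) *\<^sub>R (vd (vd \<gamma>) t + (\<Sum>j\<in>{1..m-1}. u j *\<^sub>R vd (vd (X j)) t))
     + fst p *\<^sub>R (\<Sum>j\<in>{1..m-1}. snd q j *\<^sub>R vd (X j) t)
     + fst q *\<^sub>R (\<Sum>j\<in>{1..m-1}. snd p j *\<^sub>R vd (X j) t)"

definition normal_part :: "'a::euclidean_space set \<Rightarrow> 'a \<Rightarrow> 'a" where
  "normal_part W v = (THE w. w \<in> orthogonal_comp W \<and> v - w \<in> W)"

text \<open>Second fundamental form at a regular point (pulled back to parameters).\<close>
definition sff ::
  "(real \<Rightarrow> 'a::euclidean_space) \<Rightarrow> (nat \<Rightarrow> real \<Rightarrow> 'a) \<Rightarrow> nat \<Rightarrow> real \<Rightarrow> (nat \<Rightarrow> real)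
    \<Rightarrow> real \<times> (nat \<Rightarrow> real) \<Rightarrow> real \<times> (nat \<Rightarrow> real) \<Rightarrow> 'a" where
  "sff \<gamma> X m t u p q =
     normal_part (dsigma \<gamma> X m t u ` params m) (d2sigma \<gamma> X m t u p q)"

definition sff_kernel ::
  "(real \<Rightarrow> 'a::euclidean_space) \<Rightarrow> (nat \<Rightarrow> real \<Rightarrow> 'a) \<Rightarrow> nat \<Rightarrow> real \<Rightarrow> (nat \<Rightarrow> real) \<Rightarrow> 'a set" where
  "sff_kernel \<gamma> X m t u =
     dsigma \<gamma> X m t u ` {p \<in> params m. \<forall>q\<in>params m. sff \<gamma> X m t u p q = 0}"

definition rank_one ::
  "real set \<Rightarrow> (real \<Rightarrow> 'a::euclidean_space) \<Rightarrow> (nat \<Rightarrow> real \<Rightarrow> 'a) \<Rightarrow> nat \<Rightarrow> bool" where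
  "rank_one I \<gamma> X m \<longleftrightarrow>
     (\<forall>t\<in>I. \<forall>u. regular_point \<gamma> X m t u \<longrightarrow> dim (sff_kernel \<gamma> X m t u) = m - 1)"

definition rho :: "(nat \<Rightarrow> real \<Rightarrow> 'a::euclidean_space) \<Rightarrow> nat \<Rightarrow> nat \<Rightarrow> real \<Rightarrow> 'a" where
  "rho X m j t = normal_part (span {X i t | i. i \<in> {1..m-1}}) (vd (X j) t)"

text \<open>Degree of D at t: rank of sum c_j X_j(t) |-> sum c_j rho_t X_j(t).\<close>
definition ruling_degree :: "(nat \<Rightarrow> real \<Rightarrow> 'a::euclidean_space) \<Rightarrow> nat \<Rightarrow> real \<Rightarrow> nat" where
  "ruling_degree X m t =
     dim ((\<lambda>c. \<Sum>j\<in>{1..m-1}. c j *\<^sub>R rho X m j t) ` UNIV)"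

definition striction_f ::
  "(real \<Rightarrow> 'a::euclidean_space) \<Rightarrow> (nat \<Rightarrow> real \<Rightarrow> 'a) \<Rightarrow> nat \<Rightarrow> real \<Rightarrow> (nat \<Rightarrow> real) \<Rightarrow> real" where
  "striction_f \<gamma> X m t u =
     - ((vd \<gamma> t \<bullet> rho X m (m-1) t)
        + (\<Sum>i\<in>{1..m-2}. u i * (vd (X i) t \<bullet> rho X m (m-1) t)))
     / (norm (rho X m (m-1) t))\<^sup>2"

end

theory Submission
  imports Defs
begin

lemma np_unique:
  fixes W :: "'a::euclidean_space set"
  assumes "subspace W" "v - w \<in> W" "w \<in> orthogonal_comp W"
  shows "normal_part W v = w"
proof -
  have *: "w' = w" if "w' \<in> orthogonal_comp W \<and> v - w' \<in> W" for w'
  proof -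
    have "w' - w = (v - w) - (v - w')" by simp
    moreover have "(v - w) - (v - w') \<in> W" using that assms subspace_diff by blast
    ultimately have "w' - w \<in> W" by simp
    moreover have "w' - w \<in> orthogonal_comp W"
      using that assms subspace_orthogonal_comp[of W] by (simp add: subspace_diff)
    ultimately have "orthogonal (w' - w) (w' - w)" unfolding orthogonal_comp_def by auto
    thus ?thesis by (simp add: orthogonal_def)
  qed
  show ?thesis unfolding normal_part_def
  proof (rule the_equality)
    show "w \<in> orthogonal_comp W \<and> v - w \<in> W" using assms by blast
  next
    fix w' assume "w' \<in> orthogonal_comp W \<and> v - w' \<in> W" thus "w' = w" by (rule *)
  qed
qed

lemma np_props:
  fixes W :: "'a::euclidean_space set"
  assumes "subspace W"
  shows "normal_part W v \<in> orthogonal_comp W \<and> v - normal_part W v \<in> W"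
proof -
  obtain y z where y: "y \<in> span W" and z: "\<And>w. w \<in> span W \<Longrightarrow> orthogonal z w" and "v = y + z"
    by (rule orthogonal_subspace_decomp_exists[of W v]) blast
  have sW: "span W = W" using assms by (simp add: span_eq_iff)
  have "\<forall>w\<in>W. orthogonal w z" using z span_base orthogonal_commute by blast
  hence "z \<in> orthogonal_comp W" by (simp add: orthogonal_comp_def)
  moreover have "v - z \<in> W" using y sW \<open>v = y + z\<close> by simp
  ultimately have "normal_part W v = z" using np_unique[OF assms] by blast
  thus ?thesis using \<open>z \<in> orthogonal_comp W\<close> \<open>v - z \<in> W\<close> by simp
qed

lemma oc_zero:
  fixes W :: "'a::euclidean_space set"
  assumes "x \<in> W" "x \<in> orthogonal_comp W" shows "x = 0"
  using assms unfolding orthogonal_comp_def orthogonal_def by auto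


lemma sum_delta_scale:
  fixes f :: "nat \<Rightarrow> 'a::real_vector"
  assumes "k \<in> A" "finite A"
  shows "(\<Sum>i\<in>A. (if i = k then 1 else 0) *\<^sub>R f i) = f k"
proof -
  have "(\<Sum>i\<in>A. (if i = k then 1 else 0) *\<^sub>R f i) = (\<Sum>i\<in>A. if i = k then f i else 0)"
    by (rule sum.cong) auto
  also have "\<dots> = f k" using assms by simp
  finally show ?thesis .
qed

lemma sum_delta_real:
  fixes c :: "nat \<Rightarrow> real"
  assumes "k \<in> A" "finite A"
  shows "(\<Sum>i\<in>A. c i * (if i = k then 1 else 0)) = c k"
proof -
  have "(\<Sum>i\<in>A. c i * (if i = k then 1 else 0)) = (\<Sum>i\<in>A. if i = k then c i else 0)"
    by (rule sum.cong) auto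
  also have "\<dots> = c k" using assms by simp
  finally show ?thesis .
qed

theorem mainTheorem7:
  fixes I :: "real set" and \<gamma> :: "real \<Rightarrow> 'a::euclidean_space"
    and X :: "nat \<Rightarrow> real \<Rightarrow> 'a" and m n :: nat
  assumes dimension: "DIM('a) = m + n"
    and m2: "m \<ge> 2"
    and I: "open I" "is_interval I" "I \<noteq> {}"
    and gamma_smooth: "smooth_curve_on I \<gamma>"
    and unit_speed: "\<forall>t\<in>I. norm (vd \<gamma> t) = 1"
    and X_smooth: "\<forall>j\<in>{1..m-1}. smooth_curve_on I (X j)"
    and orthonormal: "\<forall>t\<in>I. \<forall>i\<in>{1..m-1}. \<forall>j\<in>{1..m-1}.
                         X i t \<bullet> X j t = (if i = j then 1 else 0)"
    and rank1: "rank_one I \<gamma> X m"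
    and degree1: "\<forall>t\<in>I. ruling_degree X m t = 1"
    and rho_nz: "\<forall>t\<in>I. rho X m (m-1) t \<noteq> 0"
  shows "\<forall>t\<in>I. \<forall>u. singular_point \<gamma> X m t (u(m-1 := striction_f \<gamma> X m t u))"
proof (intro ballI allI)
  fix t u assume t: "t \<in> I"
  define D where "D = span {X i t | i. i \<in> {1..m-1}}"
  have subD: "subspace D" unfolding D_def by simp
  have XD: "X i t \<in> D" if "i \<in> {1..m-1}" for i
    unfolding D_def using that by (auto intro: span_base)
  have orth: "X i t \<bullet> X j t = (if i = j then 1 else 0)" if "i \<in> {1..m-1}" "j \<in> {1..m-1}" for i j
    using orthonormal t that by blast
  have coef: "(\<Sum>j\<in>{1..m-1}. c j *\<^sub>R X j t) \<bullet> X k t = c k" if "k \<in> {1..m-1}" for c k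
  proof -
    have "(\<Sum>j\<in>{1..m-1}. c j *\<^sub>R X j t) \<bullet> X k t = (\<Sum>j\<in>{1..m-1}. c j * (if j = k then 1 else 0))"
      unfolding inner_sum_left
    proof (rule sum.cong[OF refl])
      fix j assume "j \<in> {1..m-1}"
      thus "c j *\<^sub>R X j t \<bullet> X k t = c j * (if j = k then 1 else 0)"
        using orth[OF _ that, of j] by simp
    qed
    also have "\<dots> = c k" using that by (intro sum_delta_real) auto
    finally show ?thesis .
  qed
  have perp: "x \<bullet> y = 0" if "x \<in> D" "y \<in> orthogonal_comp D" for x y
    using that by (auto simp: orthogonal_comp_def orthogonal_def)
  have expand: "x = (\<Sum>j\<in>{1..m-1}. (x \<bullet> X j t) *\<^sub>R X j t)" if xD: "x \<in> D" for x
  proof -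
    define r where "r = x - (\<Sum>j\<in>{1..m-1}. (x \<bullet> X j t) *\<^sub>R X j t)"
    have rD: "r \<in> D" unfolding r_def using xD XD subD
      by (intro subspace_diff subspace_sum subspace_scale) auto
    have r0: "r \<bullet> X k t = 0" if "k \<in> {1..m-1}" for k
      unfolding r_def inner_diff_left using coef[OF that] by simp
    have "orthogonal r y" if "y \<in> {X i t | i. i \<in> {1..m-1}}" for y
      using that r0 by (auto simp: orthogonal_def)
    hence "orthogonal r r" using orthogonal_to_span rD unfolding D_def by blast
    hence "r = 0" by (simp add: orthogonal_def)
    thus ?thesis unfolding r_def by simp
  qed
  define rh where "rh j = rho X m j t" for j
  have rhp: "rh j \<in> orthogonal_comp D \<and> vd (X j) t - rh j \<in> D" for j
    unfolding rh_def rho_def D_def[symmetric] using np_props[OF subD] by blast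
  define \<rho> where "\<rho> = rh (m-1)"
  have m1: "m - 1 \<in> {1..m-1}" using m2 by auto
  have rnz: "\<rho> \<noteq> 0" using rho_nz t unfolding \<rho>_def rh_def by blast
  have rr: "\<rho> \<bullet> \<rho> \<noteq> 0" using rnz by simp
  have rocD: "\<rho> \<in> orthogonal_comp D" using rhp \<rho>_def by blast
  define R where "R = range (\<lambda>c. \<Sum>j\<in>{1..m-1}. c j *\<^sub>R rh j)"
  have dimR: "dim R = 1" using degree1 t unfolding ruling_degree_def R_def rh_def by simp
  have subR: "subspace R" unfolding subspace_def
  proof (intro conjI ballI allI)
    show "0 \<in> R" unfolding R_def by (rule image_eqI[where x="\<lambda>_. 0"]) auto
  next
    fix x y assume "x \<in> R" "y \<in> R"
    then obtain c d where "x = (\<Sum>j\<in>{1..m-1}. c j *\<^sub>R rh j)" "y = (\<Sum>j\<in>{1..m-1}. d j *\<^sub>R rh j)"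
      unfolding R_def by auto
    hence "x + y = (\<Sum>j\<in>{1..m-1}. (c j + d j) *\<^sub>R rh j)"
      by (simp add: sum.distrib scaleR_add_left)
    thus "x + y \<in> R" unfolding R_def by (rule image_eqI[where x="\<lambda>j. c j + d j"]) simp
  next
    fix k :: real and x assume "x \<in> R"
    then obtain c where "x = (\<Sum>j\<in>{1..m-1}. c j *\<^sub>R rh j)" unfolding R_def by auto
    hence "k *\<^sub>R x = (\<Sum>j\<in>{1..m-1}. (k * c j) *\<^sub>R rh j)"
      by (simp add: scaleR_sum_right)
    thus "k *\<^sub>R x \<in> R" unfolding R_def by (rule image_eqI[where x="\<lambda>j. k * c j"]) simp
  qed
  have rhR: "rh j \<in> R" if "j \<in> {1..m-1}" for j
    unfolding R_def
    by (rule image_eqI[where x="\<lambda>i. if i = j then 1 else 0"]) (use sum_delta_scale[OF that, of rh] in simp_all)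
  have spanR: "R \<subseteq> span {\<rho>}"
  proof -
    have "{\<rho>} \<subseteq> R" using rhR m1 \<rho>_def by auto
    moreover have "dim R \<le> dim {\<rho>}" using dimR rnz by simp
    ultimately have "span {\<rho>} = span R" by (rule dim_eq_span)
    thus ?thesis using subR span_superset[of R] by simp
  qed
  define lam where "lam j = (rh j \<bullet> \<rho>) / (\<rho> \<bullet> \<rho>)" for j
  have rhlam: "rh j = lam j *\<^sub>R \<rho>" if jS: "j \<in> {1..m-1}" for j
  proof -
    have "rh j \<in> range (\<lambda>k. k *\<^sub>R \<rho>)" using spanR rhR[OF jS] span_singleton[of \<rho>] by blast
    then obtain k where k: "rh j = k *\<^sub>R \<rho>" by blast
    hence "lam j = k" unfolding lam_def using rr by simp
    thus ?thesis using k by simp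
  qed
  have lam1: "lam (m-1) = 1" unfolding lam_def \<rho>_def[symmetric] using rr by simp
  define g where "g = vd \<gamma> t"
  define e where "e = normal_part D g"
  have ep: "e \<in> orthogonal_comp D \<and> g - e \<in> D" using np_props[OF subD] e_def by blast
  have key: "e \<in> span {\<rho>}"
  proof (rule ccontr)
    assume ne: "e \<notin> span {\<rho>}"
    have enz: "e \<noteq> 0" using ne span_zero by metis
    define u0 where "u0 = (\<lambda>_::nat. 0::real)"
    have ds0: "dsigma \<gamma> X m t u0 p = fst p *\<^sub>R g + (\<Sum>j\<in>{1..m-1}. snd p j *\<^sub>R X j t)" for p
      by (simp add: dsigma_def g_def u0_def)
    define W where "W = dsigma \<gamma> X m t u0 ` params m"
    have subW: "subspace W" unfolding subspace_def
    proof (intro conjI ballI allI)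
      show "0 \<in> W" unfolding W_def
        by (rule image_eqI[where x="(0, \<lambda>_. 0)"]) (auto simp: ds0 params_def)
    next
      fix x y assume "x \<in> W" "y \<in> W"
      then obtain p q where pq: "p \<in> params m" "q \<in> params m" "x = dsigma \<gamma> X m t u0 p"
        "y = dsigma \<gamma> X m t u0 q" unfolding W_def by auto
      hence "x + y = dsigma \<gamma> X m t u0 (fst p + fst q, \<lambda>j. snd p j + snd q j)"
        by (simp add: ds0 sum.distrib scaleR_add_left algebra_simps)
      moreover have "(fst p + fst q, \<lambda>j. snd p j + snd q j) \<in> params m"
        using pq(1,2) unfolding params_def by (auto split: prod.splits)
      ultimately show "x + y \<in> W" unfolding W_def by blast
    next
      fix k :: real and x assume "x \<in> W"
      then obtain p where p: "p \<in> params m" "x = dsigma \<gamma> X m t u0 p" unfolding W_def by auto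
      hence "k *\<^sub>R x = dsigma \<gamma> X m t u0 (k * fst p, \<lambda>j. k * snd p j)"
        by (simp add: ds0 scaleR_sum_right scaleR_add_right)
      moreover have "(k * fst p, \<lambda>j. k * snd p j) \<in> params m"
        using p(1) unfolding params_def by (auto split: prod.splits)
      ultimately show "k *\<^sub>R x \<in> W" unfolding W_def by blast
    qed
    have Wsub: "\<exists>d s. d \<in> D \<and> y = d + s *\<^sub>R g" if yW: "y \<in> W" for y
    proof -
      obtain p where "y = dsigma \<gamma> X m t u0 p" using yW unfolding W_def by auto
      hence "y = (\<Sum>j\<in>{1..m-1}. snd p j *\<^sub>R X j t) + fst p *\<^sub>R g" by (simp add: ds0)
      moreover have "(\<Sum>j\<in>{1..m-1}. snd p j *\<^sub>R X j t) \<in> D"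
        using XD subD by (intro subspace_sum subspace_scale) auto
      ultimately show ?thesis by blast
    qed
    have Kfact: "K = 0" if yW: "y \<in> W" and yK: "y - K *\<^sub>R \<rho> \<in> D" for y K
    proof -
      obtain d s where ds: "d \<in> D" "y = d + s *\<^sub>R g" using Wsub[OF yW] by blast
      have "K *\<^sub>R \<rho> - s *\<^sub>R e = (d - (y - K *\<^sub>R \<rho>)) + s *\<^sub>R (g - e)"
        using ds(2) by (simp add: algebra_simps)
      moreover have "(d - (y - K *\<^sub>R \<rho>)) + s *\<^sub>R (g - e) \<in> D"
        using subspace_add[OF subD subspace_diff[OF subD ds(1) yK] subspace_scale[OF subD conjunct2[OF ep]]] .
      ultimately have inD: "K *\<^sub>R \<rho> - s *\<^sub>R e \<in> D" by metis
      have inO: "K *\<^sub>R \<rho> - s *\<^sub>R e \<in> orthogonal_comp D"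
        using subspace_diff[OF subspace_orthogonal_comp subspace_scale[OF subspace_orthogonal_comp rocD]
          subspace_scale[OF subspace_orthogonal_comp conjunct1[OF ep]]] .
      have eq: "K *\<^sub>R \<rho> = s *\<^sub>R e" using oc_zero[OF inD inO] by simp
      have "s = 0"
      proof (rule ccontr)
        assume sn: "s \<noteq> 0"
        have "e = (1/s) *\<^sub>R (s *\<^sub>R e)" using sn by simp
        also have "\<dots> = (1/s) *\<^sub>R (K *\<^sub>R \<rho>)" using eq by simp
        also have "\<dots> = (K / s) *\<^sub>R \<rho>" by simp
        finally have "e = (K / s) *\<^sub>R \<rho>" .
        hence "e \<in> span {\<rho>}" by (simp add: span_mul span_base)
        thus False using ne by simp
      qed
      thus ?thesis using eq rnz by simp
    qed
    have regular: "regular_point \<gamma> X m t u0"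
      unfolding regular_point_def inj_on_def
    proof (intro ballI impI)
      fix p q assume pP: "p \<in> params m" and qP: "q \<in> params m"
        and eqpq: "dsigma \<gamma> X m t u0 p = dsigma \<gamma> X m t u0 q"
      define a where "a = fst p - fst q"
      define c where "c j = snd p j - snd q j" for j
      have lin: "a *\<^sub>R g + (\<Sum>j\<in>{1..m-1}. c j *\<^sub>R X j t) = 0"
        using eqpq unfolding ds0 a_def c_def
        by (simp add: algebra_simps sum_subtractf scaleR_diff_left)
      have cD: "(\<Sum>j\<in>{1..m-1}. c j *\<^sub>R X j t) \<in> D"
        using XD subD by (intro subspace_sum subspace_scale) auto
      have "a *\<^sub>R e = - (\<Sum>j\<in>{1..m-1}. c j *\<^sub>R X j t) - a *\<^sub>R (g - e)"
        using lin by (simp add: algebra_simps eq_neg_iff_add_eq_0)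
      moreover have "- (\<Sum>j\<in>{1..m-1}. c j *\<^sub>R X j t) - a *\<^sub>R (g - e) \<in> D"
        using subspace_diff[OF subD subspace_neg[OF subD cD] subspace_scale[OF subD conjunct2[OF ep]]] .
      ultimately have "a *\<^sub>R e \<in> D" by metis
      moreover have "a *\<^sub>R e \<in> orthogonal_comp D"
        using subspace_scale[OF subspace_orthogonal_comp conjunct1[OF ep]] .
      ultimately have "a *\<^sub>R e = 0" by (rule oc_zero)
      hence a0: "a = 0" using enz by simp
      hence lin2: "(\<Sum>j\<in>{1..m-1}. c j *\<^sub>R X j t) = 0" using lin by simp
      have "snd p j = snd q j" for j
      proof (cases "j \<in> {1..m-1}")
        case True
        have "c j = 0" using coef[OF True, of c] lin2 by simp
        thus ?thesis unfolding c_def by simp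
      next
        case False
        thus ?thesis using pP qP unfolding params_def by (auto split: prod.splits)
      qed
      hence "snd p = snd q" by auto
      moreover have "fst p = fst q" using a0 unfolding a_def by simp
      ultimately show "p = q" by (simp add: prod_eq_iff)
    qed
    have dimK: "dim (sff_kernel \<gamma> X m t u0) = m - 1"
      using rank1 t regular unfolding rank_one_def by blast
    define z where "z = (\<Sum>j\<in>{1..m-1}. lam j *\<^sub>R X j t)"
    define H where "H = {x \<in> D. x \<bullet> z = 0}"
    have kerH: "sff_kernel \<gamma> X m t u0 \<subseteq> H"
    proof
      fix x assume "x \<in> sff_kernel \<gamma> X m t u0"
      then obtain p where pP: "p \<in> params m" and pk: "\<forall>q\<in>params m. sff \<gamma> X m t u0 p q = 0"
        and xp: "x = dsigma \<gamma> X m t u0 p"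
        unfolding sff_kernel_def by auto
      obtain a c where pac: "p = (a, c)" by fastforce
      have inW: "d2sigma \<gamma> X m t u0 p q \<in> W" if qP: "q \<in> params m" for q
      proof -
        have "normal_part W (d2sigma \<gamma> X m t u0 p q) = 0"
          using pk qP unfolding sff_def W_def by blast
        thus ?thesis using np_props[OF subW, of "d2sigma \<gamma> X m t u0 p q"] by simp
      qed
      define q1 where "q1 = (0::real, \<lambda>j::nat. if j = m-1 then 1::real else 0)"
      have q1P: "q1 \<in> params m" unfolding q1_def params_def using m1 by auto
      have "d2sigma \<gamma> X m t u0 p q1 = a *\<^sub>R vd (X (m-1)) t"
        unfolding d2sigma_def q1_def pac using sum_delta_scale[OF m1, of "\<lambda>j. vd (X j) t"] by simp
      hence y1: "a *\<^sub>R vd (X (m-1)) t \<in> W" using inW[OF q1P] by simp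
      have "a *\<^sub>R vd (X (m-1)) t - a *\<^sub>R \<rho> \<in> D"
        using rhp[of "m-1"] subD unfolding \<rho>_def
        by (metis scaleR_diff_right subspace_scale)
      hence a0: "a = 0" by (rule Kfact[OF y1])
      define q2 where "q2 = (1::real, \<lambda>j::nat. 0::real)"
      have q2P: "q2 \<in> params m" unfolding q2_def params_def by auto
      have "d2sigma \<gamma> X m t u0 p q2 = (\<Sum>j\<in>{1..m-1}. c j *\<^sub>R vd (X j) t)"
        unfolding d2sigma_def q2_def pac using a0 by simp
      hence y2: "(\<Sum>j\<in>{1..m-1}. c j *\<^sub>R vd (X j) t) \<in> W" using inW[OF q2P] by simp
      have "(\<Sum>j\<in>{1..m-1}. c j *\<^sub>R rh j) = (\<Sum>j\<in>{1..m-1}. (c j * lam j) *\<^sub>R \<rho>)"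
        by (rule sum.cong) (auto simp: rhlam)
      also have "\<dots> = (\<Sum>j\<in>{1..m-1}. c j * lam j) *\<^sub>R \<rho>" by (simp add: scaleR_sum_left)
      finally have "(\<Sum>j\<in>{1..m-1}. c j *\<^sub>R vd (X j) t) - (\<Sum>j\<in>{1..m-1}. c j * lam j) *\<^sub>R \<rho>
          = (\<Sum>j\<in>{1..m-1}. c j *\<^sub>R (vd (X j) t - rh j))"
        by (simp add: sum_subtractf scaleR_diff_right)
      moreover have "(\<Sum>j\<in>{1..m-1}. c j *\<^sub>R (vd (X j) t - rh j)) \<in> D"
        using rhp subD by (intro subspace_sum subspace_scale) auto
      ultimately have "(\<Sum>j\<in>{1..m-1}. c j *\<^sub>R vd (X j) t) - (\<Sum>j\<in>{1..m-1}. c j * lam j) *\<^sub>R \<rho> \<in> D"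
        by simp
      hence cl0: "(\<Sum>j\<in>{1..m-1}. c j * lam j) = 0" by (rule Kfact[OF y2])
      have xe: "x = (\<Sum>j\<in>{1..m-1}. c j *\<^sub>R X j t)" using xp a0 pac ds0 by simp
      have xD: "x \<in> D" unfolding xe using XD subD by (intro subspace_sum subspace_scale) auto
      have "x \<bullet> z = (\<Sum>k\<in>{1..m-1}. lam k * (x \<bullet> X k t))"
        unfolding z_def by (simp add: inner_sum_right)
      also have "\<dots> = (\<Sum>k\<in>{1..m-1}. c k * lam k)"
      proof (rule sum.cong[OF refl])
        fix k assume kS: "k \<in> {1..m-1}"
        show "lam k * (x \<bullet> X k t) = c k * lam k" unfolding xe coef[OF kS] by simp
      qed
      finally have "x \<bullet> z = 0" using cl0 by simp
      thus "x \<in> H" using xD unfolding H_def by simp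
    qed
    have subH: "subspace H" unfolding H_def subspace_def using subD
      by (auto simp: subspace_add subspace_scale subspace_0 inner_add_left)
    have zD: "z \<in> D" unfolding z_def using XD subD by (intro subspace_sum subspace_scale) auto
    have "z \<bullet> X (m-1) t = 1" unfolding z_def using coef[OF m1, of lam] lam1 by simp
    hence "z \<noteq> 0" by auto
    hence "z \<notin> H" unfolding H_def by simp
    hence HD: "H \<subset> D" using zD unfolding H_def by blast
    have sH: "span H = H" using subH by (rule span_eq_iff[THEN iffD2])
    have sD: "span D = D" using subD by (rule span_eq_iff[THEN iffD2])
    have "span H \<subset> span D" unfolding sH sD by (rule HD)
    hence dHD: "dim H < dim D" by (rule dim_psubset)
    have fin: "finite {X i t | i. i \<in> {1..m-1}}" by (simp add: Setcompr_eq_image)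
    have "card {X i t | i. i \<in> {1..m-1}} \<le> card {1..m-1}"
      unfolding Setcompr_eq_image by (rule card_image_le) simp
    moreover have "dim D \<le> card {X i t | i. i \<in> {1..m-1}}"
      by (rule dim_le_card[OF _ fin]) (simp add: D_def)
    ultimately have "dim D \<le> m - 1" by simp
    moreover have "dim (sff_kernel \<gamma> X m t u0) \<le> dim H" using kerH by (rule dim_subset)
    ultimately show False using dimK dHD by simp
  qed
  hence "e \<in> range (\<lambda>k. k *\<^sub>R \<rho>)" using span_singleton[of \<rho>] by blast
  then obtain \<mu> where mu: "e = \<mu> *\<^sub>R \<rho>" by blast
  define u' where "u' = u(m-1 := striction_f \<gamma> X m t u)"
  define v where "v = g + (\<Sum>j\<in>{1..m-1}. u' j *\<^sub>R vd (X j) t)"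
  have Sdec: "{1..m-1} = insert (m-1) {1..m-2}" "m-1 \<notin> {1..m-2}" using m2 by auto
  have gr: "g \<bullet> \<rho> = \<mu> * (\<rho> \<bullet> \<rho>)"
  proof -
    have "g \<bullet> \<rho> = (g - e) \<bullet> \<rho> + e \<bullet> \<rho>" by (simp add: inner_diff_left)
    also have "(g - e) \<bullet> \<rho> = 0" using perp ep rocD by blast
    finally show ?thesis using mu by simp
  qed
  have xr: "vd (X i) t \<bullet> \<rho> = lam i * (\<rho> \<bullet> \<rho>)" if "i \<in> {1..m-1}" for i
  proof -
    have "vd (X i) t \<bullet> \<rho> = (vd (X i) t - rh i) \<bullet> \<rho> + rh i \<bullet> \<rho>" by (simp add: inner_diff_left)
    also have "(vd (X i) t - rh i) \<bullet> \<rho> = 0" using perp rhp rocD by blast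
    finally show ?thesis using rhlam[OF that] by simp
  qed
  have sf: "striction_f \<gamma> X m t u = - (\<mu> + (\<Sum>i\<in>{1..m-2}. u i * lam i))"
  proof -
    have "(\<Sum>i\<in>{1..m-2}. u i * (vd (X i) t \<bullet> \<rho>)) = (\<Sum>i\<in>{1..m-2}. u i * lam i) * (\<rho> \<bullet> \<rho>)"
      unfolding sum_distrib_right by (rule sum.cong) (auto simp: xr)
    thus ?thesis unfolding striction_f_def g_def[symmetric] rh_def[symmetric] \<rho>_def[symmetric]
      using gr rr by (simp add: power2_norm_eq_inner field_simps)
  qed
  have csum: "\<mu> + (\<Sum>j\<in>{1..m-1}. u' j * lam j) = 0"
  proof -
    have "(\<Sum>j\<in>{1..m-1}. u' j * lam j) = u' (m-1) * lam (m-1) + (\<Sum>j\<in>{1..m-2}. u' j * lam j)"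
      unfolding Sdec(1) using Sdec(2) by simp
    also have "(\<Sum>j\<in>{1..m-2}. u' j * lam j) = (\<Sum>j\<in>{1..m-2}. u j * lam j)"
      unfolding u'_def by (rule sum.cong) auto
    finally show ?thesis using lam1 sf unfolding u'_def by simp
  qed
  have vD: "v \<in> D"
  proof -
    have "(\<Sum>j\<in>{1..m-1}. u' j *\<^sub>R rh j) = (\<Sum>j\<in>{1..m-1}. (u' j * lam j) *\<^sub>R \<rho>)"
      by (rule sum.cong) (auto simp: rhlam)
    also have "\<dots> = (\<Sum>j\<in>{1..m-1}. u' j * lam j) *\<^sub>R \<rho>" by (simp add: scaleR_sum_left)
    finally have "e + (\<Sum>j\<in>{1..m-1}. u' j *\<^sub>R rh j) = 0"
      using csum mu by (simp add: scaleR_add_left[symmetric])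
    moreover have "v - (e + (\<Sum>j\<in>{1..m-1}. u' j *\<^sub>R rh j))
        = (g - e) + (\<Sum>j\<in>{1..m-1}. u' j *\<^sub>R (vd (X j) t - rh j))"
      by (simp add: v_def algebra_simps sum_subtractf)
    moreover have "(g - e) + (\<Sum>j\<in>{1..m-1}. u' j *\<^sub>R (vd (X j) t - rh j)) \<in> D"
      using ep rhp subD by (intro subspace_add subspace_sum subspace_scale) auto
    ultimately show ?thesis by simp
  qed
  define p1 where "p1 = (1::real, \<lambda>j. if j \<in> {1..m-1} then - (v \<bullet> X j t) else 0)"
  define p0 where "p0 = (0::real, \<lambda>j::nat. 0::real)"
  have p1P: "p1 \<in> params m" unfolding p1_def params_def by auto
  have p0P: "p0 \<in> params m" unfolding p0_def params_def by auto
  have "dsigma \<gamma> X m t u' p1 = v + (\<Sum>j\<in>{1..m-1}. (- (v \<bullet> X j t)) *\<^sub>R X j t)"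
  proof -
    have "(\<Sum>j\<in>{1..m-1}. snd p1 j *\<^sub>R X j t) = (\<Sum>j\<in>{1..m-1}. (- (v \<bullet> X j t)) *\<^sub>R X j t)"
      unfolding p1_def by (rule sum.cong) auto
    moreover have "fst p1 *\<^sub>R (vd \<gamma> t + (\<Sum>j\<in>{1..m-1}. u' j *\<^sub>R vd (X j) t)) = v"
      unfolding p1_def v_def g_def by simp
    ultimately show ?thesis unfolding dsigma_def by simp
  qed
  also have "\<dots> = 0" using expand[OF vD] by (simp add: sum_negf)
  finally have d1: "dsigma \<gamma> X m t u' p1 = 0" .
  have d0: "dsigma \<gamma> X m t u' p0 = 0" unfolding dsigma_def p0_def by simp
  have "p1 \<noteq> p0" unfolding p1_def p0_def by simp
  hence "\<not> inj_on (dsigma \<gamma> X m t u') (params m)"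
    using d1 d0 p1P p0P unfolding inj_on_def by metis
  thus "singular_point \<gamma> X m t (u(m-1 := striction_f \<gamma> X m t u))"
    unfolding regular_point_def u'_def by simp
qed

end
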